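(* For $n\ge 2$, let $G^2_n$ be the graph obtained from an edge $u_1u_2$ by adding a set $X$ of $n-2$ new vertices, each adjacent to both $u_1$ and $u_2$ (and no other edges). Then $G^2_n$ is $2$-degenerate and $\mathrm{id}^{\leq 3}(G^2_n)=n-1$. Moreover, $\mathrm{conv}^{\leq 3}(G^2_n)=n-1$ if $n$ is even and $\mathrm{conv}^{\leq 3}(G^2_n)=n-2$ if $n$ is odd.
   Context: A graph is $k$-degenerate if its vertices can be ordered so that each vertex has at most $k$ neighbours later in the order. For an oriented graph $D$ and $X\subseteq V(D)$, the inversion of $X$ reverses every arc with both endvertices in $X$; a $(\leq p)$-inversion is the inversion of a set of at most $p$ vertices. $\mathrm{id}^{\leq p}(G)$ is the maximum, over all ordered pairs $(\vec G_1,\vec G_2)$ of orientations of $G$, of the minimum number of $(\leq p)$-inversions transforming $\vec G_1$ into $\vec G_2$. $\mathrm{conv}^{\leq p}(G)$ is the minimum number of $(\leq p)$-inversions transforming an orientation of $G$ into its converse (all arcs reversed); it does not depend on the orientation. *)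

theory Defs
  imports Main
begin

text \<open>Graphs: a vertex set V and a symmetric irreflexive edge relation E \<subseteq> V \<times> V.
  Oriented graphs: sets of arcs (ordered pairs).\<close>

definition k_degenerate :: "'a set \<Rightarrow> ('a \<times> 'a) set \<Rightarrow> nat \<Rightarrow> bool" where
  "k_degenerate V E k \<longleftrightarrow>
     (\<exists>vs. distinct vs \<and> set vs = V \<and>
        (\<forall>i<length vs. card {j. i < j \<and> j < length vs \<and> (vs ! i, vs ! j) \<in> E} \<le> k))"

definition is_orientation :: "('a \<times> 'a) set \<Rightarrow> ('a \<times> 'a) set \<Rightarrow> bool" where
  "is_orientation E D \<longleftrightarrow> D \<subseteq> E \<and> (\<forall>u v. (u, v) \<in> E \<longrightarrow> ((u, v) \<in> D \<longleftrightarrow> (v, u) \<notin> D))"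

definition invert :: "'a set \<Rightarrow> ('a \<times> 'a) set \<Rightarrow> ('a \<times> 'a) set" where
  "invert X D = {(u, v). ((u, v) \<in> D \<and> \<not> (u \<in> X \<and> v \<in> X)) \<or> ((v, u) \<in> D \<and> u \<in> X \<and> v \<in> X)}"

definition inv_dist :: "nat \<Rightarrow> 'a set \<Rightarrow> ('a \<times> 'a) set \<Rightarrow> ('a \<times> 'a) set \<Rightarrow> nat" where
  "inv_dist p V D1 D2 = (LEAST k. \<exists>Xs. length Xs = k \<and>
      (\<forall>X\<in>set Xs. X \<subseteq> V \<and> finite X \<and> card X \<le> p) \<and> fold invert Xs D1 = D2)"

definition id_le :: "nat \<Rightarrow> 'a set \<Rightarrow> ('a \<times> 'a) set \<Rightarrow> nat" where
  "id_le p V E = Max {inv_dist p V D1 D2 | D1 D2. is_orientation E D1 \<and> is_orientation E D2}"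

definition conv_le :: "nat \<Rightarrow> 'a set \<Rightarrow> ('a \<times> 'a) set \<Rightarrow> nat" where
  "conv_le p V E = (let D = (SOME D. is_orientation E D) in inv_dist p V D (converse D))"

text \<open>G^2_n on vertices {0..<n}: u1 = 0, u2 = 1, X = {2..<n}.\<close>
definition G2_V :: "nat \<Rightarrow> nat set" where
  "G2_V n = {..<n}"

definition G2_E :: "nat \<Rightarrow> (nat \<times> nat) set" where
  "G2_E n = (let A = {(0, 1)} \<union> {(0, x) | x. x \<in> {2..<n}} \<union> {(1, x) | x. x \<in> {2..<n}}
             in A \<union> converse A)"

end

theory Submission
  imports Defs
begin

lemma mem_E: "(a,b) \<in> G2_E n \<longleftrightarrow> ((a=0\<and>b=1) \<or> (a=1\<and>b=0) \<or> (a=0\<and>2\<le>b\<and>b<n) \<or> (a=1\<and>2\<le>b\<and>b<n)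
   \<or> (b=0\<and>2\<le>a\<and>a<n) \<or> (b=1\<and>2\<le>a\<and>a<n))"
  unfolding G2_E_def Let_def by auto

lemma E_sym: "\<forall>a b. (a,b)\<in>G2_E n \<longrightarrow> (b,a) \<in> G2_E n" by (auto simp: mem_E)

definition cnt :: "'a set list \<Rightarrow> 'a \<Rightarrow> 'a \<Rightarrow> nat" where
  "cnt Xs u v = length (filter (\<lambda>Y. u\<in>Y \<and> v\<in>Y) Xs)"

lemma cnt_Nil[simp]: "cnt [] u v = 0" by (simp add: cnt_def)
lemma cnt_Cons[simp]: "cnt (Y#Xs) u v = (if u\<in>Y\<and>v\<in>Y then 1 else 0) + cnt Xs u v"
  by (simp add: cnt_def)
lemma cnt_append[simp]: "cnt (Xs@Ys) u v = cnt Xs u v + cnt Ys u v" by (simp add: cnt_def)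
lemma cnt_sym: "cnt Xs u v = cnt Xs v u" by (induction Xs) auto
lemma cnt_zero: "\<forall>Y\<in>set Xs. v\<notin>Y \<Longrightarrow> cnt Xs u v = 0" by (induction Xs) auto
lemma cnt_map: "distinct xs \<Longrightarrow> cnt (map g xs) u v = card {x\<in>set xs. u \<in> g x \<and> v \<in> g x}"
  unfolding cnt_def by (simp add: filter_map distinct_length_filter o_def Int_def conj_commute)

lemma invert_mem: "(u,v) \<in> invert Y D \<longleftrightarrow> (if u\<in>Y\<and>v\<in>Y then (v,u)\<in>D else (u,v)\<in>D)"
  unfolding invert_def by auto

lemma fold_mem: "(u,v) \<in> fold invert Xs D \<longleftrightarrow> (if even (cnt Xs u v) then (u,v)\<in>D else (v,u)\<in>D)"
proof (induction Xs arbitrary: D)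
  case Nil show ?case by simp
next
  case (Cons Y Xs) show ?case by (auto simp: Cons.IH invert_mem)
qed

lemma orient_flip: "is_orientation E D \<Longrightarrow> (u,v)\<in>E \<Longrightarrow> (v,u)\<in>D \<longleftrightarrow> (u,v)\<notin>D"
  unfolding is_orientation_def by blast

lemma fold_iff:
  assumes o1: "is_orientation E D1" and o2: "is_orientation E D2" and sym: "\<forall>a b. (a,b)\<in>E \<longrightarrow> (b,a)\<in>E"
  shows "fold invert Xs D1 = D2 \<longleftrightarrow> (\<forall>u v. (u,v)\<in>E \<longrightarrow> (odd (cnt Xs u v) \<longleftrightarrow> ((u,v)\<in>D1 \<longleftrightarrow> (u,v)\<notin>D2)))"
proof
  assume h: "fold invert Xs D1 = D2"
  show "\<forall>u v. (u,v)\<in>E \<longrightarrow> (odd (cnt Xs u v) \<longleftrightarrow> ((u,v)\<in>D1 \<longleftrightarrow> (u,v)\<notin>D2))"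
  proof (intro allI impI)
    fix u v assume e: "(u,v)\<in>E"
    have "(u,v)\<in>D2 \<longleftrightarrow> (if even (cnt Xs u v) then (u,v)\<in>D1 else (v,u)\<in>D1)"
      using fold_mem[of u v Xs D1] h by simp
    moreover have "(v,u)\<in>D1 \<longleftrightarrow> (u,v)\<notin>D1" using orient_flip[OF o1 e] .
    ultimately show "odd (cnt Xs u v) \<longleftrightarrow> ((u,v)\<in>D1 \<longleftrightarrow> (u,v)\<notin>D2)" by auto
  qed
next
  assume h: "\<forall>u v. (u,v)\<in>E \<longrightarrow> (odd (cnt Xs u v) \<longleftrightarrow> ((u,v)\<in>D1 \<longleftrightarrow> (u,v)\<notin>D2))"
  show "fold invert Xs D1 = D2"
  proof (rule set_eqI)
    fix p :: "'a \<times> 'a"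
    obtain u v where p: "p = (u,v)" by (cases p)
    show "p \<in> fold invert Xs D1 \<longleftrightarrow> p \<in> D2"
    proof (cases "(u,v)\<in>E")
      case True
      have "(v,u)\<in>D1 \<longleftrightarrow> (u,v)\<notin>D1" using orient_flip[OF o1 True] .
      then show ?thesis using h True fold_mem[of u v Xs D1] p by auto
    next
      case False
      then have "(v,u)\<notin>E" using sym by blast
      then show ?thesis using False o1 o2 fold_mem[of u v Xs D1] p unfolding is_orientation_def by auto
    qed
  qed
qed

lemma converse_orient:
  assumes "is_orientation E D" "\<forall>a b. (a,b)\<in>E \<longrightarrow> (b,a)\<in>E"
  shows "is_orientation E (converse D)"
  using assms unfolding is_orientation_def by blast

lemma good_G2:
  assumes o1: "is_orientation (G2_E n) D1" and o2: "is_orientation (G2_E n) D2"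
    and h01: "odd (cnt Xs 0 1) \<longleftrightarrow> ((0,1)\<in>D1 \<longleftrightarrow> (0,1)\<notin>D2)"
    and h0: "\<And>x. 2\<le>x \<Longrightarrow> x<n \<Longrightarrow> odd (cnt Xs 0 x) \<longleftrightarrow> ((0,x)\<in>D1 \<longleftrightarrow> (0,x)\<notin>D2)"
    and h1: "\<And>x. 2\<le>x \<Longrightarrow> x<n \<Longrightarrow> odd (cnt Xs 1 x) \<longleftrightarrow> ((1,x)\<in>D1 \<longleftrightarrow> (1,x)\<notin>D2)"
  shows "fold invert Xs D1 = D2"
proof -
  have sym: "\<forall>a b. (a,b)\<in>G2_E n \<longrightarrow> (b,a)\<in>G2_E n" by (rule E_sym)
  have rev: "odd (cnt Xs v u) \<longleftrightarrow> ((v,u)\<in>D1 \<longleftrightarrow> (v,u)\<notin>D2)"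
    if e: "(u,v) \<in> G2_E n" and hh: "odd (cnt Xs u v) \<longleftrightarrow> ((u,v)\<in>D1 \<longleftrightarrow> (u,v)\<notin>D2)" for u v
  proof -
    have a: "(v,u)\<in>D1 \<longleftrightarrow> (u,v)\<notin>D1" using orient_flip[OF o1 e] .
    have b: "(v,u)\<in>D2 \<longleftrightarrow> (u,v)\<notin>D2" using orient_flip[OF o2 e] .
    show ?thesis using hh a b cnt_sym[of Xs u v] by auto
  qed
  have "\<forall>u v. (u,v)\<in>G2_E n \<longrightarrow> (odd (cnt Xs u v) \<longleftrightarrow> ((u,v)\<in>D1 \<longleftrightarrow> (u,v)\<notin>D2))"
  proof (intro allI impI)
    fix u v assume e: "(u,v)\<in>G2_E n"
    then consider "u=0\<and>v=1" | "u=1\<and>v=0" | "u=0\<and>2\<le>v\<and>v<n" | "u=1\<and>2\<le>v\<and>v<n"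
      | "v=0\<and>2\<le>u\<and>u<n" | "v=1\<and>2\<le>u\<and>u<n" unfolding mem_E by blast
    then show "odd (cnt Xs u v) \<longleftrightarrow> ((u,v)\<in>D1 \<longleftrightarrow> (u,v)\<notin>D2)"
    proof cases
      case 1 then show ?thesis using h01 by simp
    next
      case 2 then show ?thesis using rev[of 0 1] h01 by (simp add: mem_E)
    next
      case 3 then show ?thesis using h0 by simp
    next
      case 4 then show ?thesis using h1 by simp
    next
      case 5 then show ?thesis using rev[of 0 u] h0[of u] by (simp add: mem_E)
    next
      case 6 then show ?thesis using rev[of 1 u] h1[of u] by (simp add: mem_E)
    qed
  qed
  then show ?thesis using fold_iff[OF o1 o2 sym] by blast
qed

lemma nec_G2:
  assumes o1: "is_orientation (G2_E n) D1" and o2: "is_orientation (G2_E n) D2"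
    and f: "fold invert Xs D1 = D2" and e: "(u,v) \<in> G2_E n"
  shows "odd (cnt Xs u v) \<longleftrightarrow> ((u,v)\<in>D1 \<longleftrightarrow> (u,v)\<notin>D2)"
  using fold_iff[OF o1 o2 E_sym] f e by blast


lemma upper:
  assumes n: "n \<ge> 2" and o1: "is_orientation (G2_E n) D1" and o2: "is_orientation (G2_E n) D2"
  shows "\<exists>Xs. length Xs = n - 1 \<and> (\<forall>X\<in>set Xs. X \<subseteq> G2_V n \<and> finite X \<and> card X \<le> 3)
     \<and> fold invert Xs D1 = D2"
proof -
  define d where "d a b \<longleftrightarrow> ((a,b)\<in>D1 \<longleftrightarrow> (a,b)\<notin>D2)" for a b :: nat
  define gen :: "nat \<Rightarrow> nat set" where "gen x = (if d 0 x \<and> d 1 x then {0,1,x} else if d 0 x then {0,x}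
     else if d 1 x then {1,x} else {})" for x
  define T where "T = {x\<in>{2..<n}. d 0 x \<and> d 1 x}"
  define fx :: "nat set" where "fx = (if odd (card T) = d 0 1 then {} else {0,1})"
  define Xs where "Xs = map gen [2..<n] @ [fx]"
  have len: "length Xs = n - 1" using n by (simp add: Xs_def)
  have valid: "\<forall>X\<in>set Xs. X \<subseteq> G2_V n \<and> finite X \<and> card X \<le> 3"
    using n by (auto simp: Xs_def gen_def fx_def G2_V_def card_insert_if)
  have c0: "cnt Xs 0 x = (if d 0 x then 1 else 0)" if x: "2\<le>x" "x<n" for x
  proof -
    have "{y\<in>set [2..<n]. 0 \<in> gen y \<and> x \<in> gen y} = (if d 0 x then {x} else {})"
      using x by (auto simp: gen_def split: if_splits)
    moreover have "x \<notin> fx" using x by (auto simp: fx_def)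
    ultimately show ?thesis by (simp add: Xs_def cnt_map)
  qed
  have c1: "cnt Xs 1 x = (if d 1 x then 1 else 0)" if x: "2\<le>x" "x<n" for x
  proof -
    have "{y\<in>set [2..<n]. 1 \<in> gen y \<and> x \<in> gen y} = (if d 1 x then {x} else {})"
      using x by (auto simp: gen_def split: if_splits)
    moreover have "x \<notin> fx" using x by (auto simp: fx_def)
    ultimately show ?thesis by (simp add: Xs_def cnt_map)
  qed
  have c01: "cnt Xs 0 1 = card T + (if odd (card T) = d 0 1 then 0 else 1)"
  proof -
    have "{y\<in>set [2..<n]. 0 \<in> gen y \<and> 1 \<in> gen y} = T"
      by (auto simp: gen_def T_def split: if_splits)
    then show ?thesis by (simp add: Xs_def cnt_map fx_def)
  qed
  have "fold invert Xs D1 = D2"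
    apply (rule good_G2[OF o1 o2])
    using c0 c1 c01 by (auto simp: d_def)
  then show ?thesis using len valid by blast
qed

fun Lk :: "nat \<Rightarrow> nat set list" where
  "Lk 0 = [{0,1,2}]"
| "Lk (Suc k) = Lk k @ [{0, 2*k+3, 2*k+4}, {1, 2*k+3, 2*k+4}]"

lemma Lk_props: "length (Lk k) = 2*k+1 \<and> (\<forall>Y\<in>set (Lk k). Y \<subseteq> {..<2*k+3} \<and> finite Y \<and> card Y \<le> 3)
  \<and> cnt (Lk k) 0 1 = 1 \<and> (\<forall>x\<in>{2..<2*k+3}. cnt (Lk k) 0 x = 1 \<and> cnt (Lk k) 1 x = 1)"
proof (induction k)
  case 0
  then show ?case by (auto simp: card_insert_if)
next
  case (Suc k)
  have z: "cnt (Lk k) a x = 0" if "x \<ge> 2*k+3" for a x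
  proof (rule cnt_zero, intro ballI)
    fix Y assume "Y \<in> set (Lk k)"
    then have "Y \<subseteq> {..<2*k+3}" using Suc.IH by blast
    then show "x \<notin> Y" using that by auto
  qed
  have "\<forall>x\<in>{2..<2*Suc k+3}. cnt (Lk (Suc k)) 0 x = 1 \<and> cnt (Lk (Suc k)) 1 x = 1"
  proof
    fix x assume x: "x \<in> {2..<2*Suc k+3}"
    show "cnt (Lk (Suc k)) 0 x = 1 \<and> cnt (Lk (Suc k)) 1 x = 1"
    proof (cases "x < 2*k+3")
      case True then show ?thesis using Suc.IH x by auto
    next
      case False then show ?thesis using z[of x] x by auto
    qed
  qed
  moreover have sub: "\<And>Y x. Y \<in> set (Lk k) \<Longrightarrow> x\<in>Y \<Longrightarrow> x < 2*k+3" using Suc.IH by blast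
  ultimately show ?case using Suc.IH by (auto simp: card_insert_if dest: sub)
qed

definition e0 :: "nat \<Rightarrow> nat \<Rightarrow> nat set \<Rightarrow> nat" where
  "e0 n a Y = (\<Sum>x\<in>{2..<n}. if a\<in>Y \<and> x\<in>Y then 1 else 0)"

lemma e0_eq: "e0 n a Y = (if a\<in>Y then card (Y \<inter> {2..<n}) else 0)"
proof (cases "a\<in>Y")
  case True
  have "(\<Sum>x\<in>{2..<n}. if x\<in>Y then 1 else 0) = card ({2..<n} \<inter> Y)"
    by (simp add: sum.If_cases)
  then show ?thesis using True by (simp add: e0_def Int_commute)
qed (simp add: e0_def)

lemma gen_ineq:
  assumes "finite Y" "card Y \<le> 3"
  shows "e0 n 0 Y + e0 n 1 Y + (e0 n 0 Y + (if 0\<in>Y\<and>1\<in>Y then 1 else 0)) mod 2 \<le> 2"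
proof -
  define k where "k = card (Y \<inter> {2..<n})"
  have "card (Y \<inter> {2..<n}) + card (Y \<inter> {0,1}) = card ((Y \<inter> {2..<n}) \<union> (Y \<inter> {0,1}))"
    using assms by (intro card_Un_disjoint[symmetric]) auto
  also have "\<dots> \<le> card Y" using assms by (intro card_mono) auto
  finally have le: "k + card (Y \<inter> {0,1}) \<le> 3" using assms k_def by linarith
  show ?thesis
  proof (cases "0\<in>Y")
    case True note t0 = True
    show ?thesis
    proof (cases "1\<in>Y")
      case True
      then have "Y \<inter> {0,1} = {0,1}" using t0 by auto
      then have "k \<le> 1" using le by simp
      then show ?thesis using t0 True by (simp add: e0_eq k_def[symmetric]) presburger
    next
      case False
      then have "Y \<inter> {0,1} = {0}" using t0 by auto
      then have "k \<le> 2" using le by simp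
      then show ?thesis using t0 False by (simp add: e0_eq k_def[symmetric]) presburger
    qed
  next
    case False note f0 = False
    show ?thesis
    proof (cases "1\<in>Y")
      case True
      then have "Y \<inter> {0,1} = {1}" using f0 by auto
      then have "k \<le> 2" using le by simp
      then show ?thesis using f0 True by (simp add: e0_eq k_def[symmetric])
    next
      case False
      then show ?thesis using f0 by (simp add: e0_eq)
    qed
  qed
qed

definition SS :: "nat \<Rightarrow> nat \<Rightarrow> nat set list \<Rightarrow> nat" where
  "SS n a Xs = (\<Sum>x\<in>{2..<n}. cnt Xs a x)"

lemma SS_Cons: "SS n a (Y#Xs) = e0 n a Y + SS n a Xs"
  by (simp add: SS_def e0_def sum.distrib)

lemma key:
  "\<forall>Y\<in>set Xs. finite Y \<and> card Y \<le> 3 \<Longrightarrow>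
    SS n 0 Xs + SS n 1 Xs + (SS n 0 Xs + cnt Xs 0 1) mod 2 \<le> 2 * length Xs"
proof (induction Xs)
  case Nil then show ?case by (simp add: SS_def)
next
  case (Cons Y Xs)
  have g: "e0 n 0 Y + e0 n 1 Y + (e0 n 0 Y + (if 0\<in>Y\<and>1\<in>Y then 1 else 0)) mod 2 \<le> 2"
    using Cons.prems by (intro gen_ineq) auto
  have ih: "SS n 0 Xs + SS n 1 Xs + (SS n 0 Xs + cnt Xs 0 1) mod 2 \<le> 2 * length Xs"
    using Cons by auto
  define t :: nat where "t = (if 0\<in>Y\<and>1\<in>Y then 1 else 0)"
  have m: "(e0 n 0 Y + SS n 0 Xs + (t + cnt Xs 0 1)) mod 2 \<le> (e0 n 0 Y + t) mod 2 + (SS n 0 Xs + cnt Xs 0 1) mod 2"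
    by presburger
  show ?case using g ih m unfolding SS_Cons cnt_Cons t_def[symmetric] by simp
qed

lemma odd_sum: "finite A \<Longrightarrow> \<forall>a\<in>A. odd (f a) \<Longrightarrow> card A \<le> sum f A \<and> even (sum f A + card A)"
proof (induction A rule: finite_induct)
  case empty then show ?case by simp
next
  case (insert a A)
  then have "odd (f a)" "card A \<le> sum f A \<and> even (sum f A + card A)" by auto
  then show ?case using insert.hyps by (auto elim!: oddE)
qed

lemma lower:
  assumes n: "n \<ge> 2" and valid: "\<forall>Y\<in>set Xs. finite Y \<and> card Y \<le> 3"
    and odds: "\<And>x. 2\<le>x \<Longrightarrow> x<n \<Longrightarrow> odd (cnt Xs 0 x) \<and> odd (cnt Xs 1 x)"
  shows "n - 2 \<le> length Xs \<and> (odd (n + cnt Xs 0 1) \<longrightarrow> n - 1 \<le> length Xs)"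
proof -
  have k: "SS n 0 Xs + SS n 1 Xs + (SS n 0 Xs + cnt Xs 0 1) mod 2 \<le> 2 * length Xs"
    using key[OF valid] .
  have s0: "n - 2 \<le> SS n 0 Xs \<and> even (SS n 0 Xs + (n - 2))"
    using odd_sum[of "{2..<n}" "\<lambda>x. cnt Xs 0 x"] odds by (auto simp: SS_def)
  have s1: "n - 2 \<le> SS n 1 Xs"
    using odd_sum[of "{2..<n}" "\<lambda>x. cnt Xs 1 x"] odds by (auto simp: SS_def)
  show ?thesis
  proof (intro conjI impI)
    show "n - 2 \<le> length Xs" using k s0 s1 by linarith
  next
    assume "odd (n + cnt Xs 0 1)"
    then have "(SS n 0 Xs + cnt Xs 0 1) mod 2 = 1" using s0 n by presburger
    then show "n - 1 \<le> length Xs" using k s0 s1 by linarith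
  qed
qed


lemma inv_dist_le:
  "\<forall>X\<in>set Xs. X \<subseteq> V \<and> finite X \<and> card X \<le> p \<Longrightarrow> fold invert Xs D1 = D2 \<Longrightarrow> inv_dist p V D1 D2 \<le> length Xs"
  unfolding inv_dist_def by (rule Least_le) blast

lemma inv_dist_ge:
  assumes ex: "\<exists>Xs. (\<forall>X\<in>set Xs. X \<subseteq> V \<and> finite X \<and> card X \<le> p) \<and> fold invert Xs D1 = D2"
    and lb: "\<And>Xs. \<forall>X\<in>set Xs. X \<subseteq> V \<and> finite X \<and> card X \<le> p \<Longrightarrow> fold invert Xs D1 = D2 \<Longrightarrow> m \<le> length Xs"
  shows "m \<le> inv_dist p V D1 D2"
proof -
  let ?P = "\<lambda>k. \<exists>Xs. length Xs = k \<and> (\<forall>X\<in>set Xs. X \<subseteq> V \<and> finite X \<and> card X \<le> p) \<and> fold invert Xs D1 = D2"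
  have "\<exists>k. ?P k" using ex by blast
  then have "?P (LEAST k. ?P k)" by (rule LeastI_ex)
  then obtain Xs where "length Xs = (LEAST k. ?P k)" "\<forall>X\<in>set Xs. X \<subseteq> V \<and> finite X \<and> card X \<le> p"
    "fold invert Xs D1 = D2" by blast
  then show ?thesis using lb unfolding inv_dist_def by fastforce
qed

definition Dlt :: "nat \<Rightarrow> (nat \<times> nat) set" where
  "Dlt n = {(u,v). (u,v)\<in>G2_E n \<and> u<v}"
definition Dmix :: "nat \<Rightarrow> (nat \<times> nat) set" where
  "Dmix n = {(u,v). (u,v)\<in>G2_E n \<and> (if u<2 \<and> v<2 then u<v else v<u)}"

lemma Dlt_orient: "is_orientation (G2_E n) (Dlt n)"
  unfolding is_orientation_def Dlt_def by (auto simp: mem_E)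
lemma Dmix_orient: "is_orientation (G2_E n) (Dmix n)"
  unfolding is_orientation_def Dmix_def by (auto simp: mem_E)

lemma conv_lb:
  assumes n: "n \<ge> 2" and o: "is_orientation (G2_E n) D"
    and valid: "\<forall>X\<in>set Xs. X \<subseteq> G2_V n \<and> finite X \<and> card X \<le> 3"
    and f: "fold invert Xs D = converse D"
  shows "n - 2 \<le> length Xs \<and> (even n \<longrightarrow> n - 1 \<le> length Xs)"
proof -
  have oc: "is_orientation (G2_E n) (converse D)" using converse_orient[OF o E_sym] .
  have od: "odd (cnt Xs u v)" if e: "(u,v)\<in>G2_E n" for u v
  proof -
    have "(v,u)\<in>D \<longleftrightarrow> (u,v)\<notin>D" using orient_flip[OF o e] .
    then show ?thesis using nec_G2[OF o oc f e] by auto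
  qed
  have l: "n - 2 \<le> length Xs \<and> (odd (n + cnt Xs 0 1) \<longrightarrow> n - 1 \<le> length Xs)"
    using valid by (intro lower[OF n]) (auto intro!: od simp: mem_E)
  have "odd (cnt Xs 0 1)" by (rule od) (simp add: mem_E)
  then show ?thesis using l by auto
qed

lemma conv_dist:
  assumes n: "n \<ge> 2" and o: "is_orientation (G2_E n) D"
  shows "inv_dist 3 (G2_V n) D (converse D) = (if even n then n - 1 else n - 2)"
proof -
  have oc: "is_orientation (G2_E n) (converse D)" using converse_orient[OF o E_sym] .
  obtain Xs where X: "length Xs = n - 1" "\<forall>X\<in>set Xs. X \<subseteq> G2_V n \<and> finite X \<and> card X \<le> 3"
    "fold invert Xs D = converse D" using upper[OF n o oc] by blast
  have ub: "inv_dist 3 (G2_V n) D (converse D) \<le> n - 1" using inv_dist_le[OF X(2,3)] X(1) by simp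
  have lb: "n - 2 \<le> inv_dist 3 (G2_V n) D (converse D) \<and>
     (even n \<longrightarrow> n - 1 \<le> inv_dist 3 (G2_V n) D (converse D))"
  proof -
    have ex: "\<exists>Xs. (\<forall>X\<in>set Xs. X \<subseteq> G2_V n \<and> finite X \<and> card X \<le> 3) \<and> fold invert Xs D = converse D"
      using X by blast
    have a: "n - 2 \<le> inv_dist 3 (G2_V n) D (converse D)"
      by (rule inv_dist_ge[OF ex]) (use conv_lb[OF n o] in blast)
    have b: "even n \<Longrightarrow> n - 1 \<le> inv_dist 3 (G2_V n) D (converse D)"
      by (rule inv_dist_ge[OF ex]) (use conv_lb[OF n o] in blast)
    show ?thesis using a b by blast
  qed
  show ?thesis
  proof (cases "even n")
    case True then show ?thesis using ub lb by simp
  next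
    case False
    define k where "k = (n - 3) div 2"
    have nk: "n = 2*k+3" using False n k_def by presburger
    have P: "length (Lk k) = 2*k+1 \<and> (\<forall>Y\<in>set (Lk k). Y \<subseteq> {..<2*k+3} \<and> finite Y \<and> card Y \<le> 3)
      \<and> cnt (Lk k) 0 1 = 1 \<and> (\<forall>x\<in>{2..<2*k+3}. cnt (Lk k) 0 x = 1 \<and> cnt (Lk k) 1 x = 1)"
      by (rule Lk_props)
    have yes: "((u,v)\<in>D \<longleftrightarrow> (u,v)\<notin>converse D)" if e: "(u,v)\<in>G2_E n" for u v
      using orient_flip[OF o e] by auto
    have f: "fold invert (Lk k) D = converse D"
    proof (rule good_G2[OF o oc])
      have c01: "cnt (Lk k) 0 1 = 1" using P by simp
      show "odd (cnt (Lk k) 0 1) = ((0, 1) \<in> D \<longleftrightarrow> (0, 1) \<notin> converse D)"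
        using c01 yes[of 0 1] by (simp add: mem_E)
    next
      fix x :: nat assume x: "2 \<le> x" "x < n"
      have cx: "cnt (Lk k) 0 x = 1 \<and> cnt (Lk k) 1 x = 1" using P nk x by simp
      show "odd (cnt (Lk k) 0 x) = ((0, x) \<in> D \<longleftrightarrow> (0, x) \<notin> converse D)"
        using cx yes[of 0 x] x by (simp add: mem_E)
    next
      fix x :: nat assume x: "2 \<le> x" "x < n"
      have cx: "cnt (Lk k) 0 x = 1 \<and> cnt (Lk k) 1 x = 1" using P nk x by simp
      show "odd (cnt (Lk k) 1 x) = ((1, x) \<in> D \<longleftrightarrow> (1, x) \<notin> converse D)"
        using cx yes[of 1 x] x by (simp add: mem_E)
    qed
    have v: "\<forall>X\<in>set (Lk k). X \<subseteq> G2_V n \<and> finite X \<and> card X \<le> 3"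
      using P by (simp add: G2_V_def nk)
    have "inv_dist 3 (G2_V n) D (converse D) \<le> n - 2"
      using inv_dist_le[OF v f] P nk by simp
    then show ?thesis using lb False by simp
  qed
qed

lemma id_val:
  assumes n: "n \<ge> 2"
  shows "id_le 3 (G2_V n) (G2_E n) = n - 1"
proof -
  define S where "S = {inv_dist 3 (G2_V n) D1 D2 | D1 D2. is_orientation (G2_E n) D1 \<and> is_orientation (G2_E n) D2}"
  have ub: "\<And>y. y \<in> S \<Longrightarrow> y \<le> n - 1"
  proof -
    fix y assume "y \<in> S"
    then obtain D1 D2 where y: "y = inv_dist 3 (G2_V n) D1 D2" and o: "is_orientation (G2_E n) D1"
      "is_orientation (G2_E n) D2" unfolding S_def by blast
    obtain Xs where X: "length Xs = n - 1" "\<forall>X\<in>set Xs. X \<subseteq> G2_V n \<and> finite X \<and> card X \<le> 3"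
      "fold invert Xs D1 = D2" using upper[OF n o] by blast
    show "y \<le> n - 1" using inv_dist_le[OF X(2,3)] X(1) y by simp
  qed
  have fin: "finite S" using ub by (intro finite_subset[of S "{..n-1}"]) auto
  have mem: "n - 1 \<in> S"
  proof (cases "even n")
    case True
    have "inv_dist 3 (G2_V n) (Dlt n) (converse (Dlt n)) = n - 1"
      using conv_dist[OF n Dlt_orient] True by simp
    then show ?thesis unfolding S_def
      using Dlt_orient[of n] converse_orient[OF Dlt_orient E_sym, of n]
      by (intro CollectI exI[of _ "Dlt n"] exI[of _ "converse (Dlt n)"]) auto
  next
    case False
    have o1: "is_orientation (G2_E n) (Dlt n)" by (rule Dlt_orient)
    have o2: "is_orientation (G2_E n) (Dmix n)" by (rule Dmix_orient)
    obtain Xs where X: "length Xs = n - 1" "\<forall>X\<in>set Xs. X \<subseteq> G2_V n \<and> finite X \<and> card X \<le> 3"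
      "fold invert Xs (Dlt n) = Dmix n" using upper[OF n o1 o2] by blast
    have lbx: "n - 1 \<le> length Ys" if v: "\<forall>X\<in>set Ys. X \<subseteq> G2_V n \<and> finite X \<and> card X \<le> 3"
      and f: "fold invert Ys (Dlt n) = Dmix n" for Ys
    proof -
      have c0: "odd (cnt Ys 0 x) \<and> odd (cnt Ys 1 x)" if "2\<le>x" "x<n" for x
        using nec_G2[OF o1 o2 f, of 0 x] nec_G2[OF o1 o2 f, of 1 x] that
        by (simp add: mem_E Dlt_def Dmix_def)
      have c01: "even (cnt Ys 0 1)"
        using nec_G2[OF o1 o2 f, of 0 1] by (simp add: mem_E Dlt_def Dmix_def)
      have "n - 2 \<le> length Ys \<and> (odd (n + cnt Ys 0 1) \<longrightarrow> n - 1 \<le> length Ys)"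
        using v c0 by (intro lower[OF n]) auto
      then show ?thesis using c01 False by auto
    qed
    have "inv_dist 3 (G2_V n) (Dlt n) (Dmix n) = n - 1"
      using inv_dist_le[OF X(2,3)] X(1) inv_dist_ge[of "G2_V n" 3 "Dlt n" "Dmix n" "n-1"] X lbx
      by (metis le_antisym)
    then show ?thesis unfolding S_def using o1 o2
      by (intro CollectI exI[of _ "Dlt n"] exI[of _ "Dmix n"]) auto
  qed
  show ?thesis unfolding id_le_def S_def[symmetric] using Max_eqI[OF fin ub mem] .
qed

lemma degen: "k_degenerate (G2_V n) (G2_E n) 2"
  unfolding k_degenerate_def
proof (intro exI conjI allI impI)
  let ?vs = "rev [0..<n]"
  show "distinct ?vs" by simp
  show "set ?vs = G2_V n" by (auto simp: G2_V_def)
  fix i assume i: "i < length ?vs"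
  have "{j. i < j \<and> j < length ?vs \<and> (?vs ! i, ?vs ! j) \<in> G2_E n} \<subseteq> {n-2, n-1}"
  proof
    fix j assume "j \<in> {j. i < j \<and> j < length ?vs \<and> (?vs ! i, ?vs ! j) \<in> G2_E n}"
    then have j: "i < j" "j < n" "(n - Suc i, n - Suc j) \<in> G2_E n" by (auto simp: rev_nth)
    then show "j \<in> {n-2, n-1}" by (auto simp: mem_E)
  qed
  then have "card {j. i < j \<and> j < length ?vs \<and> (?vs ! i, ?vs ! j) \<in> G2_E n} \<le> card {n-2, n-1}"
    by (intro card_mono) auto
  also have "\<dots> \<le> 2" by (simp add: card_insert_if)
  finally show "card {j. i < j \<and> j < length ?vs \<and> (?vs ! i, ?vs ! j) \<in> G2_E n} \<le> 2" .
qed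

theorem mainTheorem17:
  fixes n :: nat
  assumes "n \<ge> 2"
  shows "k_degenerate (G2_V n) (G2_E n) 2
       \<and> id_le 3 (G2_V n) (G2_E n) = n - 1
       \<and> conv_le 3 (G2_V n) (G2_E n) = (if even n then n - 1 else n - 2)"
proof (intro conjI)
  show "k_degenerate (G2_V n) (G2_E n) 2" by (rule degen)
  show "id_le 3 (G2_V n) (G2_E n) = n - 1" by (rule id_val[OF assms])
  have "is_orientation (G2_E n) (SOME D. is_orientation (G2_E n) D)"
    using Dlt_orient by (rule someI)
  then show "conv_le 3 (G2_V n) (G2_E n) = (if even n then n - 1 else n - 2)"
    unfolding conv_le_def Let_def by (rule conv_dist[OF assms])
qed

end
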